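(* Let $T,B_1,B_3>0$, $\varepsilon,\varepsilon_1,\varepsilon_2>0$. The functions $K_1,K_2:Y\times\mathbb{R}\times X_{B_1}\to\mathbb{R}$, $$K_1(\tilde\theta,s,\gamma)=\int_{(0,T)^2}\chi_{\{0<t_2-t_1<\varepsilon_1\}}\big|(A_\varepsilon\tilde\theta)_{t_1}(\gamma_{t_1})-(A_\varepsilon\tilde\theta)_{t_2}(\gamma_{t_2})\big|\chi_{\{(A_\varepsilon\tilde\theta)_{t_1}(\gamma_{t_1})>\Theta(s,\gamma_{t_1},t_1)+\varepsilon_2\}}\,dt_1dt_2,$$ $$K_2(\tilde\theta,s,\gamma)=\int_{(0,T)^2}\chi_{\{0<t_2-t_1<\varepsilon_1\}}(\gamma_{t_2}-\gamma_{t_1})^+\chi_{\{(A_\varepsilon\tilde\theta)_{t_1}(\gamma_{t_1})>\Theta(s,\gamma_{t_1},t_1)+\varepsilon_2\}}\,dt_1dt_2,$$ are lower semi-continuous.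
   Context: $Q^{sat}:\mathbb{R}^3\to\mathbb{R}$ is smooth with $\partial_\theta Q^{sat}>0$, $\partial_zQ^{sat}<0$; $\Theta(w,z,t)$ is the solution $\theta$ of $\theta+Q^{sat}(\theta,z,t)=w$ (assumed well defined), smooth. $X_{B_1}$: left-continuous $\gamma:(0,T)\to[0,1]$ with total variation $\le B_1$, metric $\|\cdot\|_{L^2(0,T)}$; $\gamma_t=\gamma(t)$. $Y_{B_3}$: nondecreasing $\theta:[0,1]\to\mathbb{R}$, right-continuous on $[0,1)$, $|\theta|\le B_3$, metric $L^2(0,1)$. $Y=C([0,T);Y_{B_3})$ with sup-in-time metric. $(A_\varepsilon\tilde\theta)_t(z)=\varepsilon^{-1}\int_z^{z+\varepsilon}\tilde\theta_t(w)\,dw$, with $\tilde\theta_t(w)=B_3$ for $w\ge1$. *)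

theory Defs
  imports "HOL-Analysis.Analysis"
begin

fun Ck :: "nat \<Rightarrow> ('a::euclidean_space \<Rightarrow> real) \<Rightarrow> bool" where
  "Ck 0 f \<longleftrightarrow> continuous_on UNIV f"
| "Ck (Suc k) f \<longleftrightarrow> (\<exists>f'. (\<forall>x. (f has_derivative f' x) (at x)) \<and>
                       (\<forall>v. Ck k (\<lambda>x. f' x v)) \<and> continuous_on UNIV f)"

definition smooth :: "('a::euclidean_space \<Rightarrow> real) \<Rightarrow> bool" where
  "smooth f \<longleftrightarrow> (\<forall>k. Ck k f)"

definition total_variation_le :: "(real \<Rightarrow> real) \<Rightarrow> real set \<Rightarrow> real \<Rightarrow> bool" where
  "total_variation_le g S B \<longleftrightarrow>
     (\<forall>(n::nat) (p::nat \<Rightarrow> real). (\<forall>i\<le>n. p i \<in> S) \<and> (\<forall>i<n. p i < p (Suc i)) \<longrightarrow>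
        (\<Sum>i<n. \<bar>g (p (Suc i)) - g (p i)\<bar>) \<le> B)"

definition L2dist :: "real \<Rightarrow> real \<Rightarrow> (real \<Rightarrow> real) \<Rightarrow> (real \<Rightarrow> real) \<Rightarrow> real" where
  "L2dist a b f g = sqrt (LINT x:{a<..<b}|lborel. (f x - g x)^2)"

definition in_X :: "real \<Rightarrow> real \<Rightarrow> (real \<Rightarrow> real) \<Rightarrow> bool" where
  "in_X T B1 \<gamma> \<longleftrightarrow> (\<forall>t\<in>{0<..<T}. \<gamma> t \<in> {0..1} \<and> continuous (at_left t) \<gamma>)
                    \<and> total_variation_le \<gamma> {0<..<T} B1"

definition in_YB :: "real \<Rightarrow> (real \<Rightarrow> real) \<Rightarrow> bool" where
  "in_YB B3 \<theta> \<longleftrightarrow> mono_on {0..1} \<theta> \<and> (\<forall>w\<in>{0..<1}. continuous (at_right w) \<theta>)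
                  \<and> (\<forall>w\<in>{0..1}. \<bar>\<theta> w\<bar> \<le> B3)"

definition in_Y :: "real \<Rightarrow> real \<Rightarrow> (real \<Rightarrow> real \<Rightarrow> real) \<Rightarrow> bool" where
  "in_Y T B3 \<Theta>t \<longleftrightarrow> (\<forall>t\<in>{0..<T}. in_YB B3 (\<Theta>t t)) \<and>
     (\<forall>t\<in>{0..<T}. ((\<lambda>t'. L2dist 0 1 (\<Theta>t t') (\<Theta>t t)) \<longlongrightarrow> 0) (at t within {0..<T}))"

definition Ydist :: "real \<Rightarrow> (real \<Rightarrow> real \<Rightarrow> real) \<Rightarrow> (real \<Rightarrow> real \<Rightarrow> real) \<Rightarrow> real" where
  "Ydist T f g = (SUP t\<in>{0..<T}. L2dist 0 1 (f t) (g t))"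

definition A_eps :: "real \<Rightarrow> real \<Rightarrow> (real \<Rightarrow> real \<Rightarrow> real) \<Rightarrow> real \<Rightarrow> real \<Rightarrow> real" where
  "A_eps B3 \<epsilon> \<Theta>t t z =
     (1 / \<epsilon>) * (LINT w:{z..z+\<epsilon>}|lborel. (if w \<ge> 1 then B3 else \<Theta>t t w))"

definition K1 :: "real \<Rightarrow> real \<Rightarrow> real \<Rightarrow> real \<Rightarrow> real \<Rightarrow> (real \<times> real \<times> real \<Rightarrow> real)
                  \<Rightarrow> (real \<Rightarrow> real \<Rightarrow> real) \<Rightarrow> real \<Rightarrow> (real \<Rightarrow> real) \<Rightarrow> real" where
  "K1 T B3 \<epsilon> \<epsilon>1 \<epsilon>2 Th \<Theta>t s \<gamma> =
     (LINT p:({0<..<T} \<times> {0<..<T})|lborel.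
        indicator {p. 0 < snd p - fst p \<and> snd p - fst p < \<epsilon>1} p *
        \<bar>A_eps B3 \<epsilon> \<Theta>t (fst p) (\<gamma> (fst p)) - A_eps B3 \<epsilon> \<Theta>t (snd p) (\<gamma> (snd p))\<bar> *
        indicator {p. A_eps B3 \<epsilon> \<Theta>t (fst p) (\<gamma> (fst p)) > Th (s, \<gamma> (fst p), fst p) + \<epsilon>2} p)"

definition K2 :: "real \<Rightarrow> real \<Rightarrow> real \<Rightarrow> real \<Rightarrow> real \<Rightarrow> (real \<times> real \<times> real \<Rightarrow> real)
                  \<Rightarrow> (real \<Rightarrow> real \<Rightarrow> real) \<Rightarrow> real \<Rightarrow> (real \<Rightarrow> real) \<Rightarrow> real" where
  "K2 T B3 \<epsilon> \<epsilon>1 \<epsilon>2 Th \<Theta>t s \<gamma> =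
     (LINT p:({0<..<T} \<times> {0<..<T})|lborel.
        indicator {p. 0 < snd p - fst p \<and> snd p - fst p < \<epsilon>1} p *
        max (\<gamma> (snd p) - \<gamma> (fst p)) 0 *
        indicator {p. A_eps B3 \<epsilon> \<Theta>t (fst p) (\<gamma> (fst p)) > Th (s, \<gamma> (fst p), fst p) + \<epsilon>2} p)"

definition lsc_YRX :: "real \<Rightarrow> real \<Rightarrow> real \<Rightarrow>
     ((real \<Rightarrow> real \<Rightarrow> real) \<Rightarrow> real \<Rightarrow> (real \<Rightarrow> real) \<Rightarrow> real) \<Rightarrow> bool" where
  "lsc_YRX T B1 B3 K \<longleftrightarrow>
     (\<forall>\<Theta>t s \<gamma> \<Theta>n sn \<gamma>n.
        in_Y T B3 \<Theta>t \<and> in_X T B1 \<gamma> \<and> (\<forall>n. in_Y T B3 (\<Theta>n n) \<and> in_X T B1 (\<gamma>n n)) \<and>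
        (\<lambda>n. Ydist T (\<Theta>n n) \<Theta>t) \<longlonglongrightarrow> 0 \<and> sn \<longlonglongrightarrow> s \<and>
        (\<lambda>n. L2dist 0 T (\<gamma>n n) \<gamma>) \<longlonglongrightarrow> 0
      \<longrightarrow> ereal (K \<Theta>t s \<gamma>) \<le> liminf (\<lambda>n. ereal (K (\<Theta>n n) (sn n) (\<gamma>n n))))"

end

theory Submission
  imports Defs
begin

definition Fx :: "real \<Rightarrow> (real\<Rightarrow>real) \<Rightarrow> real \<Rightarrow> real" where
  "Fx B3 \<theta> w = (if w \<ge> 1 then B3 else \<theta> w)"

definition Ath :: "real \<Rightarrow> real \<Rightarrow> (real\<Rightarrow>real) \<Rightarrow> real \<Rightarrow> real" where
  "Ath B3 \<epsilon> \<theta> z = (1/\<epsilon>) * (LINT w:{z..z+\<epsilon>}|lborel. Fx B3 \<theta> w)"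

lemma A_eps_eq: "A_eps B3 \<epsilon> \<Theta>t t z = Ath B3 \<epsilon> (\<Theta>t t) z"
  by (simp add: A_eps_def Ath_def Fx_def)

lemma Fx_mono: assumes "in_YB B3 \<theta>" shows "mono_on {0..} (Fx B3 \<theta>)"
proof (rule mono_onI)
  fix x y :: real assume xy: "x \<in> {0..}" "y \<in> {0..}" "x \<le> y"
  show "Fx B3 \<theta> x \<le> Fx B3 \<theta> y"
  proof (cases "y \<ge> 1")
    case True
    then show ?thesis using assms xy unfolding Fx_def in_YB_def by (auto simp: abs_le_iff)
  next
    case False
    then have "\<theta> x \<le> \<theta> y" using assms xy unfolding in_YB_def by (auto intro: mono_onD)
    then show ?thesis using False xy unfolding Fx_def by auto
  qed
qed

lemma Fx_bound: assumes "in_YB B3 \<theta>" "w \<ge> 0" shows "\<bar>Fx B3 \<theta> w\<bar> \<le> B3"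
proof -
  have "\<bar>\<theta> 0\<bar> \<le> B3" using assms unfolding in_YB_def by auto
  then have "0 \<le> B3" by linarith
  then show ?thesis using assms unfolding Fx_def in_YB_def
  by (cases "w \<ge> 1") (auto simp: abs_le_iff)
qed

lemma Fx_meas:
  assumes "in_YB B3 \<theta>" "A \<subseteq> {0..}" "A \<in> sets borel"
  shows "(\<lambda>w. indicator A w * Fx B3 \<theta> w) \<in> borel_measurable borel"
proof -
  define g where "g w = Fx B3 \<theta> (max w 0)" for w
  have "mono g" unfolding g_def mono_def
    using mono_onD[OF Fx_mono[OF assms(1)]] by (auto simp: max_def)
  then have "g \<in> borel_measurable borel" by (rule borel_measurable_mono)
  then have "(\<lambda>w. indicator A w * g w) \<in> borel_measurable borel"
    using assms(3) by measurable
  moreover have "(\<lambda>w. indicator A w * g w) = (\<lambda>w. indicator A w * Fx B3 \<theta> w)"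
  proof
    fix w show "indicator A w * g w = indicator A w * Fx B3 \<theta> w"
      using assms(2) by (cases "w \<in> A") (auto simp: g_def max_def)
  qed
  ultimately show ?thesis by simp
qed

lemma Fx_set_integrable:
  assumes "in_YB B3 \<theta>" "A \<subseteq> {0..}" "A \<in> sets borel" "emeasure lborel A < \<infinity>"
  shows "set_integrable lborel A (Fx B3 \<theta>)"
  unfolding set_integrable_def
proof (rule integrableI_bounded_set[where A=A and B=B3])
  show "A \<in> sets lborel" using assms by simp
  show "(\<lambda>x. indicator A x *\<^sub>R Fx B3 \<theta> x) \<in> borel_measurable lborel"
    using Fx_meas[OF assms(1-3)] by simp
  show "emeasure lborel A < \<infinity>" by fact
  show "AE x in lborel. x \<in> A \<longrightarrow> norm (indicator A x *\<^sub>R Fx B3 \<theta> x) \<le> B3"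
    using Fx_bound[OF assms(1)] assms(2) by auto
  show "AE x in lborel. x \<notin> A \<longrightarrow> indicator A x *\<^sub>R Fx B3 \<theta> x = 0" by auto
qed

lemma Fx_diff_integrable:
  assumes "in_YB B3 \<theta>" "in_YB B3 \<theta>'" "A \<subseteq> {0..}" "A \<in> sets borel" "emeasure lborel A < \<infinity>"
  shows "set_integrable lborel A (\<lambda>w. Fx B3 \<theta> w - Fx B3 \<theta>' w)"
    "set_integrable lborel A (\<lambda>w. (Fx B3 \<theta> w - Fx B3 \<theta>' w)^2)"
proof -
  show 1: "set_integrable lborel A (\<lambda>w. Fx B3 \<theta> w - Fx B3 \<theta>' w)"
    using Fx_set_integrable[OF assms(1,3-5)] Fx_set_integrable[OF assms(2,3-5)] by auto
  show "set_integrable lborel A (\<lambda>w. (Fx B3 \<theta> w - Fx B3 \<theta>' w)^2)"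
    unfolding set_integrable_def
  proof (rule integrableI_bounded_set[where A=A and B="(2*B3)^2"])
    show "A \<in> sets lborel" using assms by simp
    have "(\<lambda>x. indicator A x *\<^sub>R (Fx B3 \<theta> x - Fx B3 \<theta>' x)) \<in> borel_measurable lborel"
      using 1 unfolding set_integrable_def by auto
    then have "(\<lambda>x. (indicator A x *\<^sub>R (Fx B3 \<theta> x - Fx B3 \<theta>' x))^2) \<in> borel_measurable lborel"
      by measurable
    moreover have "(\<lambda>x. (indicator A x *\<^sub>R (Fx B3 \<theta> x - Fx B3 \<theta>' x))^2) = 
       (\<lambda>x. indicator A x *\<^sub>R (Fx B3 \<theta> x - Fx B3 \<theta>' x)^2)"
      by (auto simp: indicator_def)
    ultimately show "(\<lambda>x. indicator A x *\<^sub>R (Fx B3 \<theta> x - Fx B3 \<theta>' x)^2) \<in> borel_measurable lborel" by simp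
    show "emeasure lborel A < \<infinity>" by fact
    show "AE x in lborel. x \<in> A \<longrightarrow> norm (indicator A x *\<^sub>R (Fx B3 \<theta> x - Fx B3 \<theta>' x)^2) \<le> (2*B3)^2"
    proof (intro AE_I2 impI)
      fix x assume "x \<in> A"
      then have "x \<ge> 0" using assms by auto
      then have "\<bar>Fx B3 \<theta> x - Fx B3 \<theta>' x\<bar> \<le> 2*B3"
        using Fx_bound[OF assms(1)] Fx_bound[OF assms(2)] by (smt (verit))
      then have "\<bar>Fx B3 \<theta> x - Fx B3 \<theta>' x\<bar>^2 \<le> (2*B3)^2"
        by (intro power_mono) auto
      then show "norm (indicator A x *\<^sub>R (Fx B3 \<theta> x - Fx B3 \<theta>' x)^2) \<le> (2*B3)^2"
        using \<open>x \<in> A\<close> by simp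
    qed
    show "AE x in lborel. x \<notin> A \<longrightarrow> indicator A x *\<^sub>R (Fx B3 \<theta> x - Fx B3 \<theta>' x)^2 = 0" by auto
  qed
qed


lemma set_integrable_const_real:
  assumes "S \<in> sets lborel" "emeasure lborel S < \<infinity>"
  shows "set_integrable lborel S (\<lambda>_. c::real)"
  unfolding set_integrable_def
  using integrable_real_indicator[of S lborel] assms
  by (intro integrable_scaleR_left) auto

lemma delta_trick:
  fixes X m I :: real
  assumes m: "m > 0" and I: "I \<ge> 0" and H: "\<And>\<delta>. \<delta> > 0 \<Longrightarrow> X \<le> \<delta>*m/2 + I/(2*\<delta>)"
  shows "X \<le> sqrt (m*I)"
proof (cases "I = 0")
  case True
  show ?thesis
  proof (rule ccontr)
    assume "\<not> ?thesis"
    then have X: "X > 0" using True by simp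
    have "X \<le> (X/m)*m/2 + I/(2*(X/m))" using H[of "X/m"] X m by simp
    then show False using True X m by simp
  qed
next
  case False
  define a where "a = sqrt I"
  define b where "b = sqrt m"
  have a: "a > 0" "a^2 = I" using False I unfolding a_def by auto
  have b: "b > 0" "b^2 = m" using m unfolding b_def by auto
  have "X \<le> (a/b)*m/2 + I/(2*(a/b))" using H[of "a/b"] a b by simp
  also have "\<dots> = a*b" using a b by (auto simp: field_simps power2_eq_square)
  also have "a*b = sqrt (m*I)" unfolding a_def b_def by (simp add: real_sqrt_mult)
  finally show ?thesis .
qed

lemma L1_le_L2:
  fixes f :: "real \<Rightarrow> real"
  assumes S: "S \<in> sets lborel" "emeasure lborel S < \<infinity>" "measure lborel S > 0"
    and i1: "set_integrable lborel S f" and i2: "set_integrable lborel S (\<lambda>x. (f x)^2)"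
  shows "(LINT x:S|lborel. \<bar>f x\<bar>) \<le> sqrt (measure lborel S * (LINT x:S|lborel. (f x)^2))"
proof (rule delta_trick)
  show "measure lborel S > 0" by fact
  show "0 \<le> (LINT x:S|lborel. (f x)^2)"
    unfolding set_lebesgue_integral_def by (intro Bochner_Integration.integral_nonneg) auto
  fix \<delta> :: real assume d: "\<delta> > 0"
  have "(LINT x:S|lborel. \<bar>f x\<bar>) \<le> (LINT x:S|lborel. \<delta>/2 + (f x)^2 / (2*\<delta>))"
  proof (rule set_integral_mono)
    show "set_integrable lborel S (\<lambda>x. \<bar>f x\<bar>)" using i1 by (rule set_integrable_abs)
    show "set_integrable lborel S (\<lambda>x. \<delta>/2 + (f x)^2 / (2*\<delta>))"
      using set_integrable_const_real[OF S(1,2)] i2 by (intro set_integral_add) auto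
    fix x
    have "0 \<le> (\<bar>f x\<bar> - \<delta>)^2" by simp
    then have "2*\<delta>*\<bar>f x\<bar> \<le> \<delta>^2 + (f x)^2" by (simp add: power2_eq_square algebra_simps)
    then show "\<bar>f x\<bar> \<le> \<delta>/2 + (f x)^2 / (2*\<delta>)" using d
      by (simp add: field_simps power2_eq_square)
  qed
  also have "\<dots> = (LINT x:S|lborel. \<delta>/2) + (LINT x:S|lborel. (f x)^2 / (2*\<delta>))"
    using set_integrable_const_real[OF S(1,2)] i2 by (intro set_integral_add) auto
  also have "\<dots> = \<delta>*measure lborel S/2 + (LINT x:S|lborel. (f x)^2)/(2*\<delta>)"
    using S by (simp add: set_integral_const)
  finally show "(LINT x:S|lborel. \<bar>f x\<bar>) \<le> \<delta>*measure lborel S/2 + (LINT x:S|lborel. (f x)^2)/(2*\<delta>)" .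
qed

lemma set_integral_cong_real:
  assumes "\<And>x. x \<in> S \<Longrightarrow> f x = g x"
  shows "(LINT x:S|lborel. f x) = (LINT x:S|lborel. (g x::real))"
  unfolding set_lebesgue_integral_def
  by (intro Bochner_Integration.integral_cong) (auto simp: indicator_def assms)

lemma set_integrable_cong_real:
  assumes "\<And>x. x \<in> S \<Longrightarrow> f x = g x" "set_integrable lborel S g"
  shows "set_integrable lborel S (f :: real \<Rightarrow> real)"
proof -
  have "(\<lambda>x. indicator S x *\<^sub>R f x) = (\<lambda>x. indicator S x *\<^sub>R g x)"
    using assms(1) by (auto simp: indicator_def)
  then show ?thesis using assms(2) unfolding set_integrable_def by simp
qed

lemma YB_L2_integrable:
  assumes "in_YB B3 \<theta>" "in_YB B3 \<theta>'"
  shows "set_integrable lborel {0<..<1} (\<lambda>w. (\<theta> w - \<theta>' w)^2)"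
    "set_integrable lborel {0<..<1} (\<lambda>w. \<theta> w - \<theta>' w)"
proof -
  have eq: "\<And>w. w \<in> {0<..<(1::real)} \<Longrightarrow> \<theta> w - \<theta>' w = Fx B3 \<theta> w - Fx B3 \<theta>' w"
    by (auto simp: Fx_def)
  show "set_integrable lborel {0<..<1} (\<lambda>w. (\<theta> w - \<theta>' w)^2)"
    by (rule set_integrable_cong_real[OF _ Fx_diff_integrable(2)[OF assms]]) (auto simp: eq)
  show "set_integrable lborel {0<..<1} (\<lambda>w. \<theta> w - \<theta>' w)"
    by (rule set_integrable_cong_real[OF _ Fx_diff_integrable(1)[OF assms]]) (auto simp: eq)
qed

lemma L1_le_L2dist:
  assumes "in_YB B3 \<theta>" "in_YB B3 \<theta>'"
  shows "(LINT w:{0<..<1}|lborel. \<bar>\<theta> w - \<theta>' w\<bar>) \<le> L2dist 0 1 \<theta> \<theta>'"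
  using L1_le_L2[of "{0<..<1}" "\<lambda>w. \<theta> w - \<theta>' w"] YB_L2_integrable[OF assms]
  unfolding L2dist_def by simp

lemma L2dist_bound:
  assumes "in_YB B3 \<theta>" "in_YB B3 \<theta>'"
  shows "L2dist 0 1 \<theta> \<theta>' \<le> 2*B3"
proof -
  have B: "0 \<le> B3" using assms(1) unfolding in_YB_def by (smt (verit) atLeastAtMost_iff)
  have le: "(LINT w:{0<..<1}|lborel. (\<theta> w - \<theta>' w)^2) \<le> (LINT w::real:{0<..<1}|lborel. (2*B3)^2)"
  proof (intro set_integral_mono)
    show "set_integrable lborel {0<..<1} (\<lambda>w. (\<theta> w - \<theta>' w)^2)" using YB_L2_integrable[OF assms] by simp
    show "set_integrable lborel {0<..<1} (\<lambda>w::real. (2*B3)^2)" by (rule set_integrable_const_real) auto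
    fix w :: real assume "w \<in> {0<..<1}"
    then have "\<bar>\<theta> w - \<theta>' w\<bar> \<le> 2*B3" using assms unfolding in_YB_def by (smt (verit) atLeastAtMost_iff greaterThanLessThan_iff)
    then have "\<bar>\<theta> w - \<theta>' w\<bar>^2 \<le> (2*B3)^2" by (intro power_mono) auto
    then show "(\<theta> w - \<theta>' w)^2 \<le> (2*B3)^2" by simp
  qed
  have c: "(LINT w::real:{0<..<1}|lborel. (2*B3)^2) = (2*B3)^2" by (simp add: set_integral_const)
  have "L2dist 0 1 \<theta> \<theta>' \<le> sqrt ((2*B3)^2)" unfolding L2dist_def
    using le c real_sqrt_le_mono by (metis)
  moreover have "sqrt ((2*B3)^2) = 2*B3" using B by (subst real_sqrt_abs) simp
  ultimately show ?thesis by simp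
qed

lemma Ath_diff:
  assumes "in_YB B3 \<theta>" "in_YB B3 \<theta>'" "\<epsilon> > 0" "z \<ge> 0"
  shows "\<bar>Ath B3 \<epsilon> \<theta> z - Ath B3 \<epsilon> \<theta>' z\<bar> \<le> L2dist 0 1 \<theta> \<theta>' / \<epsilon>"
proof -
  let ?d = "\<lambda>w. Fx B3 \<theta> w - Fx B3 \<theta>' w"
  have Z: "{z..z+\<epsilon>} \<subseteq> {0..}" using assms by auto
  have fin: "emeasure lborel {z..z+\<epsilon>} < \<infinity>" using assms by simp
  have iZ: "set_integrable lborel {z..z+\<epsilon>} ?d"
    using Fx_diff_integrable(1)[OF assms(1,2) Z _ fin] by auto
  have i01: "set_integrable lborel {0<..<1} ?d"
  proof -
    have "{0<..<(1::real)} \<subseteq> {0..}" by auto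
    then show ?thesis using Fx_diff_integrable(1)[OF assms(1,2), of "{0<..<1}"] by simp
  qed
  have "Ath B3 \<epsilon> \<theta> z - Ath B3 \<epsilon> \<theta>' z = (1/\<epsilon>) * (LINT w:{z..z+\<epsilon>}|lborel. ?d w)"
  proof -
    have i1: "set_integrable lborel {z..z+\<epsilon>} (Fx B3 \<theta>)" using Fx_set_integrable[OF assms(1) Z _ fin] by simp
    have i2: "set_integrable lborel {z..z+\<epsilon>} (Fx B3 \<theta>')" using Fx_set_integrable[OF assms(2) Z _ fin] by simp
    show ?thesis unfolding Ath_def using set_integral_diff(2)[OF i1 i2] by (simp add: right_diff_distrib)
  qed
  then have "\<bar>Ath B3 \<epsilon> \<theta> z - Ath B3 \<epsilon> \<theta>' z\<bar> = \<bar>LINT w:{z..z+\<epsilon>}|lborel. ?d w\<bar> / \<epsilon>"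
    using assms(3) by (simp add: abs_mult)
  also have "\<bar>LINT w:{z..z+\<epsilon>}|lborel. ?d w\<bar> \<le> (LINT w:{z..z+\<epsilon>}|lborel. \<bar>?d w\<bar>)"
    using set_integral_norm_bound[OF iZ] by simp
  also have "\<dots> \<le> (LINT w:{0<..<1}|lborel. \<bar>?d w\<bar>)"
    unfolding set_lebesgue_integral_def
  proof (rule integral_mono_AE)
    show "integrable lborel (\<lambda>x. indicator {z..z+\<epsilon>} x *\<^sub>R \<bar>?d x\<bar>)"
      using set_integrable_abs[OF iZ] unfolding set_integrable_def .
    show "integrable lborel (\<lambda>x. indicator {0<..<1} x *\<^sub>R \<bar>?d x\<bar>)"
      using set_integrable_abs[OF i01] unfolding set_integrable_def .
    show "AE x in lborel. indicator {z..z+\<epsilon>} x *\<^sub>R \<bar>?d x\<bar> \<le> indicator {0<..<1} x *\<^sub>R \<bar>?d x\<bar>"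
      using AE_lborel_singleton[of "0::real"]
    proof eventually_elim
      case (elim x)
      show ?case
      proof (cases "x \<in> {z..z+\<epsilon>} \<and> x < 1")
        case True
        then have "x \<in> {0<..<1}" using elim assms by auto
        then show ?thesis using True by auto
      next
        case False
        then show ?thesis by (auto simp: indicator_def Fx_def)
      qed
    qed
  qed
  also have "\<dots> = (LINT w:{0<..<1}|lborel. \<bar>\<theta> w - \<theta>' w\<bar>)"
    by (rule set_integral_cong_real) (auto simp: Fx_def)
  also have "\<dots> \<le> L2dist 0 1 \<theta> \<theta>'" by (rule L1_le_L2dist[OF assms(1,2)])
  finally show ?thesis using assms(3) by (simp add: divide_right_mono)
qed


lemma Ath_cont:
  assumes "in_YB B3 \<theta>" "\<epsilon> > 0"
  shows "continuous_on {0..1} (Ath B3 \<epsilon> \<theta>)"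
proof -
  define b where "b = 2 + \<epsilon>"
  have fin: "emeasure lborel {0..b} < \<infinity>" using assms by (simp add: b_def)
  have "set_integrable lborel {0..b} (Fx B3 \<theta>)"
    using Fx_set_integrable[OF assms(1) _ _ fin] by auto
  then have int: "Fx B3 \<theta> integrable_on {0..b}"
    by (rule set_borel_integral_eq_integral(1))
  define G where "G x = integral {0..x} (Fx B3 \<theta>)" for x
  have cG: "continuous_on {0..b} G" unfolding G_def by (rule indefinite_integral_continuous_1[OF int])
  have c1: "continuous_on {0..1} (\<lambda>z. G (z + \<epsilon>))"
    by (rule continuous_on_compose2[OF cG]) (use assms in \<open>auto intro!: continuous_intros simp: b_def\<close>)
  have c2: "continuous_on {0..1} G"
    by (rule continuous_on_subset[OF cG]) (use assms in \<open>auto simp: b_def\<close>)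
  have c: "continuous_on {0..1} (\<lambda>z. (1/\<epsilon>) * (G (z + \<epsilon>) - G z))"
    using c1 c2 by (intro continuous_intros)
  show ?thesis
  proof (rule continuous_on_cong[THEN iffD1, OF refl _ c])
    fix z :: real assume z: "z \<in> {0..1}"
    have finz: "emeasure lborel {z..z+\<epsilon>} < \<infinity>" using assms by simp
    have "set_integrable lborel {z..z+\<epsilon>} (Fx B3 \<theta>)"
      using Fx_set_integrable[OF assms(1) _ _ finz] z by auto
    then have "(LINT w:{z..z+\<epsilon>}|lborel. Fx B3 \<theta> w) = integral {z..z+\<epsilon>} (Fx B3 \<theta>)"
      by (rule set_borel_integral_eq_integral(2))
    also have "\<dots> = G (z + \<epsilon>) - G z"
    proof -
      have "Fx B3 \<theta> integrable_on {0..z+\<epsilon>}"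
        by (rule integrable_on_subinterval[OF int]) (use z assms in \<open>auto simp: b_def\<close>)
      then have "integral {0..z} (Fx B3 \<theta>) + integral {z..z+\<epsilon>} (Fx B3 \<theta>) = integral {0..z+\<epsilon>} (Fx B3 \<theta>)"
        using z assms by (intro Henstock_Kurzweil_Integration.integral_combine[where a=0 and c=z and b="z+\<epsilon>"]) auto
      then show ?thesis unfolding G_def by simp
    qed
    finally show "(1/\<epsilon>) * (G (z + \<epsilon>) - G z) = Ath B3 \<epsilon> \<theta> z" unfolding Ath_def by simp
  qed
qed

lemma Ath_diff_A:
  assumes "in_YB B3 \<theta>" "in_YB B3 \<theta>'" "\<epsilon> > 0" "z \<in> {0..1}" "z' \<in> {0..1}"
  shows "\<bar>Ath B3 \<epsilon> \<theta> z' - Ath B3 \<epsilon> \<theta>' z\<bar> \<le> L2dist 0 1 \<theta> \<theta>' / \<epsilon> + \<bar>Ath B3 \<epsilon> \<theta>' z' - Ath B3 \<epsilon> \<theta>' z\<bar>"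
  using Ath_diff[OF assms(1,2,3), of z'] assms(5) by auto

lemma L2dist_self: "L2dist 0 1 \<theta> \<theta> = 0"
  unfolding L2dist_def by simp

lemma A_joint_cont:
  assumes Y: "in_Y T B3 \<Theta>t" and e: "\<epsilon> > 0"
  shows "continuous_on ({0<..<T} \<times> {0..1}) (\<lambda>p. A_eps B3 \<epsilon> \<Theta>t (fst p) (snd p))"
  unfolding continuous_on_iff
proof (intro ballI allI impI)
  fix p :: "real \<times> real" and e' :: real
  assume p: "p \<in> {0<..<T} \<times> {0..1}" and e': "e' > 0"
  obtain t z where ptz: "p = (t, z)" by (cases p)
  have t: "t \<in> {0..<T}" and z: "z \<in> {0..1}" using p ptz by auto
  have YBt: "in_YB B3 (\<Theta>t t)" using Y t unfolding in_Y_def by auto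
  have "((\<lambda>t'. L2dist 0 1 (\<Theta>t t') (\<Theta>t t)) \<longlongrightarrow> 0) (at t within {0..<T})"
    using Y t unfolding in_Y_def by auto
  moreover have "\<epsilon>*e'/2 > 0" using e e' by simp
  ultimately have "eventually (\<lambda>t'. dist (L2dist 0 1 (\<Theta>t t') (\<Theta>t t)) 0 < \<epsilon>*e'/2) (at t within {0..<T})"
    by (rule tendstoD)
  then obtain d1 where d1: "d1 > 0" and
    H1: "\<And>t'. t' \<in> {0..<T} \<Longrightarrow> t' \<noteq> t \<Longrightarrow> dist t' t < d1 \<Longrightarrow> dist (L2dist 0 1 (\<Theta>t t') (\<Theta>t t)) 0 < \<epsilon>*e'/2"
    unfolding eventually_at by auto
  have "continuous_on {0..1} (Ath B3 \<epsilon> (\<Theta>t t))" by (rule Ath_cont[OF YBt e])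
  then obtain d2 where d2: "d2 > 0" and
    H2: "\<And>z'. z' \<in> {0..1} \<Longrightarrow> dist z' z < d2 \<Longrightarrow> dist (Ath B3 \<epsilon> (\<Theta>t t) z') (Ath B3 \<epsilon> (\<Theta>t t) z) < e'/2"
    using z e' unfolding continuous_on_iff by (metis half_gt_zero)
  show "\<exists>d>0. \<forall>x'\<in>{0<..<T} \<times> {0..1}. dist x' p < d \<longrightarrow>
           dist (A_eps B3 \<epsilon> \<Theta>t (fst x') (snd x')) (A_eps B3 \<epsilon> \<Theta>t (fst p) (snd p)) < e'"
  proof (intro exI[of _ "min d1 d2"] conjI ballI impI)
    show "min d1 d2 > 0" using d1 d2 by simp
    fix q assume q: "q \<in> {0<..<T} \<times> {0..1}" and dq: "dist q p < min d1 d2"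
    obtain t' z' where qtz: "q = (t', z')" by (cases q)
    have t': "t' \<in> {0..<T}" and z': "z' \<in> {0..1}" using q qtz by auto
    have YBt': "in_YB B3 (\<Theta>t t')" using Y t' unfolding in_Y_def by auto
    have dt: "dist t' t < d1" using dist_fst_le[of q p] dq qtz ptz by auto
    have dz: "dist z' z < d2" using dist_snd_le[of q p] dq qtz ptz by auto
    have L: "L2dist 0 1 (\<Theta>t t') (\<Theta>t t) / \<epsilon> < e'/2"
    proof (cases "t' = t")
      case True then show ?thesis using e' by (simp add: L2dist_self)
    next
      case False
      then have "L2dist 0 1 (\<Theta>t t') (\<Theta>t t) < \<epsilon>*e'/2" using H1[OF t' False dt] by simp
      then show ?thesis using e by (simp add: field_simps)
    qed
    have "\<bar>Ath B3 \<epsilon> (\<Theta>t t') z' - Ath B3 \<epsilon> (\<Theta>t t) z\<bar> \<le>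
          L2dist 0 1 (\<Theta>t t') (\<Theta>t t) / \<epsilon> + \<bar>Ath B3 \<epsilon> (\<Theta>t t) z' - Ath B3 \<epsilon> (\<Theta>t t) z\<bar>"
      by (rule Ath_diff_A[OF YBt' YBt e z z'])
    also have "\<dots> < e'/2 + e'/2" using L H2[OF z' dz] unfolding dist_real_def by linarith
    finally show "dist (A_eps B3 \<epsilon> \<Theta>t (fst q) (snd q)) (A_eps B3 \<epsilon> \<Theta>t (fst p) (snd p)) < e'"
      using qtz ptz by (simp add: A_eps_eq dist_real_def)
  qed
qed

lemma L2dist_le_Ydist:
  assumes "\<And>t. t \<in> {0..<T} \<Longrightarrow> in_YB B3 (f t)" "\<And>t. t \<in> {0..<T} \<Longrightarrow> in_YB B3 (g t)" "t \<in> {0..<T}"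
  shows "L2dist 0 1 (f t) (g t) \<le> Ydist T f g"
  unfolding Ydist_def
proof (rule cSUP_upper[OF assms(3)])
  show "bdd_above ((\<lambda>t. L2dist 0 1 (f t) (g t)) ` {0..<T})"
    using L2dist_bound assms(1,2) by (intro bdd_aboveI2[where M="2*B3"]) auto
qed

lemma A_conv:
  assumes Y: "in_Y T B3 \<Theta>t" and Yn: "\<And>n. in_Y T B3 (\<Theta>n n)" and conv: "(\<lambda>n. Ydist T (\<Theta>n n) \<Theta>t) \<longlonglongrightarrow> 0"
    and t: "t \<in> {0..<T}" and zc: "zn \<longlonglongrightarrow> z" and zn: "\<And>n. zn n \<in> {0..1}" and z: "z \<in> {0..1}" and e: "\<epsilon> > 0"
  shows "(\<lambda>n. A_eps B3 \<epsilon> (\<Theta>n n) t (zn n)) \<longlonglongrightarrow> A_eps B3 \<epsilon> \<Theta>t t z"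
proof -
  have YBt: "in_YB B3 (\<Theta>t t)" using Y t unfolding in_Y_def by auto
  have c: "(\<lambda>n. Ath B3 \<epsilon> (\<Theta>t t) (zn n)) \<longlonglongrightarrow> Ath B3 \<epsilon> (\<Theta>t t) z"
    by (rule continuous_on_tendsto_compose[OF Ath_cont[OF YBt e] zc z]) (use zn in auto)
  have g0: "(\<lambda>n. Ydist T (\<Theta>n n) \<Theta>t / \<epsilon> + \<bar>Ath B3 \<epsilon> (\<Theta>t t) (zn n) - Ath B3 \<epsilon> (\<Theta>t t) z\<bar>) \<longlonglongrightarrow> 0"
  proof -
    have "(\<lambda>n. Ath B3 \<epsilon> (\<Theta>t t) (zn n) - Ath B3 \<epsilon> (\<Theta>t t) z) \<longlonglongrightarrow> 0"
      using c by (rule LIM_zero)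
    then have "(\<lambda>n. \<bar>Ath B3 \<epsilon> (\<Theta>t t) (zn n) - Ath B3 \<epsilon> (\<Theta>t t) z\<bar>) \<longlonglongrightarrow> 0"
      using tendsto_rabs_zero by blast
    moreover have "(\<lambda>n. Ydist T (\<Theta>n n) \<Theta>t / \<epsilon>) \<longlonglongrightarrow> 0"
      using tendsto_divide_zero[OF conv] by simp
    ultimately show ?thesis using tendsto_add by fastforce
  qed
  have "(\<lambda>n. A_eps B3 \<epsilon> (\<Theta>n n) t (zn n) - A_eps B3 \<epsilon> \<Theta>t t z) \<longlonglongrightarrow> 0"
  proof (rule Lim_null_comparison[OF _ g0], intro always_eventually allI)
    fix n
    have YBn: "in_YB B3 (\<Theta>n n t)" using Yn t unfolding in_Y_def by auto
    have "\<bar>Ath B3 \<epsilon> (\<Theta>n n t) (zn n) - Ath B3 \<epsilon> (\<Theta>t t) z\<bar> \<le>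
          L2dist 0 1 (\<Theta>n n t) (\<Theta>t t) / \<epsilon> + \<bar>Ath B3 \<epsilon> (\<Theta>t t) (zn n) - Ath B3 \<epsilon> (\<Theta>t t) z\<bar>"
      by (rule Ath_diff_A[OF YBn YBt e z zn])
    also have "L2dist 0 1 (\<Theta>n n t) (\<Theta>t t) \<le> Ydist T (\<Theta>n n) \<Theta>t"
      by (rule L2dist_le_Ydist[OF _ _ t]) (use Yn Y in \<open>auto simp: in_Y_def\<close>)
    then have "L2dist 0 1 (\<Theta>n n t) (\<Theta>t t) / \<epsilon> \<le> Ydist T (\<Theta>n n) \<Theta>t / \<epsilon>"
      using e by (simp add: divide_right_mono)
    finally show "norm (A_eps B3 \<epsilon> (\<Theta>n n) t (zn n) - A_eps B3 \<epsilon> \<Theta>t t z) \<le>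
       Ydist T (\<Theta>n n) \<Theta>t / \<epsilon> + \<bar>Ath B3 \<epsilon> (\<Theta>t t) (zn n) - Ath B3 \<epsilon> (\<Theta>t t) z\<bar>"
      by (simp add: A_eps_eq)
  qed
  then show ?thesis by (rule LIM_zero_cancel)
qed


lemma meas_comp:
  fixes \<Phi> :: "real \<times> real \<Rightarrow> real" and \<gamma> :: "real \<Rightarrow> real"
  assumes cont: "continuous_on ({0<..<T} \<times> {0..1}) \<Phi>"
    and g: "\<And>t. t \<in> {0<..<T} \<Longrightarrow> \<gamma> t \<in> {0..1} \<and> continuous (at_left t) \<gamma>"
  shows "(\<lambda>t. indicator {0<..<T} t * \<Phi> (t, \<gamma> t)) \<in> borel_measurable borel"
proof -
  define S where "S = {0<..<T::real}"
  define N where "N n = real (Suc n)" for n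
  define sq where "sq n t = (real_of_int \<lceil>N n * t\<rceil> - 1) / N n" for n t
  define f where "f n k t = indicator S t * (if (real_of_int k - 1) / N n \<in> S
      then \<Phi> ((real_of_int k - 1) / N n, \<gamma> ((real_of_int k - 1) / N n)) else 0)" for n and k::int and t::real
  define u where "u n t = f n \<lceil>N n * t\<rceil> t" for n t
  have Npos: "N n > 0" for n unfolding N_def by simp
  have sq_lt: "sq n t < t" for n t
  proof -
    have "real_of_int \<lceil>N n * t\<rceil> - 1 < N n * t" by linarith
    then show ?thesis unfolding sq_def using Npos[of n] by (simp add: divide_less_eq mult.commute)
  qed
  have sq_ge: "t - 1 / N n \<le> sq n t" for n t
  proof -
    have "N n * t \<le> real_of_int \<lceil>N n * t\<rceil>" by linarith
    then have "N n * t - 1 \<le> real_of_int \<lceil>N n * t\<rceil> - 1" by linarith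
    then show ?thesis unfolding sq_def using Npos[of n] by (simp add: field_simps)
  qed
  have fm: "(\<lambda>x. f n k x) \<in> borel_measurable borel" for n k
    unfolding f_def S_def by measurable
  have cm: "(\<lambda>x. \<lceil>N n * x\<rceil>) \<in> measurable borel (count_space UNIV)" for n
    by (rule measurable_compose[OF _ measurable_real_ceiling]) measurable
  have u_meas: "u n \<in> borel_measurable borel" for n
    unfolding u_def
    using measurable_compose_countable'[where f="\<lambda>k t. f n k t" and g="\<lambda>t. \<lceil>N n * t\<rceil>" and I=UNIV and M=borel and N=borel, OF fm cm]
    by simp
  have lim: "(\<lambda>n. u n t) \<longlonglongrightarrow> indicator {0<..<T} t * \<Phi> (t, \<gamma> t)" for t
  proof (cases "t \<in> S")
    case False
    then have "u n t = 0" for n unfolding u_def f_def by simp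
    then show ?thesis using False by (simp add: S_def)
  next
    case True
    then have t: "0 < t" "t < T" unfolding S_def by auto
    have iN: "(\<lambda>n. 1 / N n) \<longlonglongrightarrow> 0"
      unfolding N_def using LIMSEQ_inverse_real_of_nat by (simp add: inverse_eq_divide)
    have sq_lim: "(\<lambda>n. sq n t) \<longlonglongrightarrow> t"
    proof (rule tendsto_sandwich[where f="\<lambda>n. t - 1 / N n" and h="\<lambda>n. t"])
      show "\<forall>\<^sub>F n in sequentially. t - 1 / N n \<le> sq n t" using sq_ge by simp
      show "\<forall>\<^sub>F n in sequentially. sq n t \<le> t" using sq_lt by (simp add: less_imp_le)
      show "(\<lambda>n. t - 1 / N n) \<longlonglongrightarrow> t" using tendsto_diff[OF tendsto_const iN] by simp
    qed simp
    have evS: "eventually (\<lambda>n. sq n t \<in> S) sequentially"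
    proof -
      have "eventually (\<lambda>n. 1 / N n < t) sequentially" using iN t(1) by (rule order_tendstoD)
      then show ?thesis
      proof eventually_elim
        case (elim n)
        then show ?case using sq_ge[of t n] sq_lt[of n t] t unfolding S_def by auto
      qed
    qed
    have "filterlim (\<lambda>n. sq n t) (at_left t) sequentially"
      unfolding filterlim_at using sq_lim sq_lt by (auto intro!: always_eventually simp: less_imp_neq)
    moreover have "(\<gamma> \<longlongrightarrow> \<gamma> t) (at_left t)" using g[of t] t by (simp add: continuous_within)
    ultimately have gl: "(\<lambda>n. \<gamma> (sq n t)) \<longlonglongrightarrow> \<gamma> t" by (rule filterlim_compose[rotated])
    have pl: "(\<lambda>n. (sq n t, \<gamma> (sq n t))) \<longlonglongrightarrow> (t, \<gamma> t)" using sq_lim gl by (rule tendsto_Pair)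
    have "(\<lambda>n. \<Phi> (sq n t, \<gamma> (sq n t))) \<longlonglongrightarrow> \<Phi> (t, \<gamma> t)"
    proof (rule continuous_on_tendsto_compose[OF cont pl])
      show "(t, \<gamma> t) \<in> {0<..<T} \<times> {0..1}" using g[of t] t by auto
      show "\<forall>\<^sub>F n in sequentially. (sq n t, \<gamma> (sq n t)) \<in> {0<..<T} \<times> {0..1}"
        using evS by eventually_elim (use g in \<open>auto simp: S_def\<close>)
    qed
    moreover have "eventually (\<lambda>n. \<Phi> (sq n t, \<gamma> (sq n t)) = u n t) sequentially"
      using evS by eventually_elim (use True in \<open>simp add: u_def f_def sq_def\<close>)
    ultimately have "(\<lambda>n. u n t) \<longlonglongrightarrow> \<Phi> (t, \<gamma> t)" by (rule Lim_transform_eventually)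
    then show ?thesis using True by (simp add: S_def)
  qed
  show ?thesis by (rule borel_measurable_LIMSEQ_real[OF lim u_meas])
qed


lemma fatou_sub:
  fixes H :: "nat \<Rightarrow> 'a::euclidean_space \<Rightarrow> real" and H0 :: "'a \<Rightarrow> real"
  assumes Q: "Q \<in> sets lborel" "emeasure lborel Q < \<infinity>"
    and Hm: "\<And>n. H n \<in> borel_measurable lborel" and H0m: "H0 \<in> borel_measurable lborel"
    and Hb: "\<And>n x. x \<in> Q \<Longrightarrow> 0 \<le> H n x \<and> H n x \<le> C"
    and H0b: "\<And>x. x \<in> Q \<Longrightarrow> 0 \<le> H0 x \<and> H0 x \<le> C"
    and sub: "\<And>r::nat\<Rightarrow>nat. strict_mono r \<Longrightarrow> \<exists>\<sigma>. strict_mono \<sigma> \<and>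
        (AE x in lborel. x \<in> Q \<longrightarrow> ennreal (H0 x) \<le> liminf (\<lambda>k. ennreal (H (r (\<sigma> k)) x)))"
  shows "ereal (LINT x:Q|lborel. H0 x) \<le> liminf (\<lambda>n. ereal (LINT x:Q|lborel. H n x))"
proof -
  define K where "K n = (LINT x:Q|lborel. H n x)" for n
  have intH: "integrable lborel (\<lambda>x. indicator Q x * H n x)" for n
  proof (rule integrableI_bounded_set[where A=Q and B=C])
    show "(\<lambda>x. indicator Q x * H n x) \<in> borel_measurable lborel" using Q Hm by measurable
  qed (use Q Hb in \<open>auto simp: indicator_def\<close>)
  have intH0: "integrable lborel (\<lambda>x. indicator Q x * H0 x)"
  proof (rule integrableI_bounded_set[where A=Q and B=C])
    show "(\<lambda>x. indicator Q x * H0 x) \<in> borel_measurable lborel" using Q H0m by measurable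
  qed (use Q H0b in \<open>auto simp: indicator_def\<close>)
  have Kdef: "K n = integral\<^sup>L lborel (\<lambda>x. indicator Q x * H n x)" for n
    unfolding K_def set_lebesgue_integral_def by simp
  have K0: "0 \<le> K n" for n
    unfolding Kdef using Hb by (intro Bochner_Integration.integral_nonneg) (auto simp: indicator_def)
  have KC: "K n \<le> C * measure lborel Q" for n
  proof -
    have "K n \<le> integral\<^sup>L lborel (\<lambda>x. indicator Q x * C)"
      unfolding Kdef
    proof (rule integral_mono[OF intH])
      show "integrable lborel (\<lambda>x. indicator Q x * C)"
        using Q by (intro integrable_mult_left integrable_real_indicator) auto
    qed (use Hb in \<open>auto simp: indicator_def\<close>)
    also have "\<dots> = C * measure lborel Q" using Q by simp
    finally show ?thesis .
  qed
  define L where "L = liminf (\<lambda>n. ereal (K n))"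
  obtain r where r: "strict_mono r" and rl: "((\<lambda>n. ereal (K n)) \<circ> r) \<longlonglongrightarrow> L"
    using liminf_subseq_lim[of "\<lambda>n. ereal (K n)"] unfolding L_def by blast
  have L0: "ereal 0 \<le> L"
    by (rule LIMSEQ_le_const[OF rl]) (use K0 in auto)
  have LC: "L \<le> ereal (C * measure lborel Q)"
    by (rule LIMSEQ_le_const2[OF rl]) (use KC in auto)
  obtain l where Ll: "L = ereal l" using L0 LC by (cases L) auto
  have l0: "0 \<le> l" using L0 Ll by simp
  have Kr: "(\<lambda>n. K (r n)) \<longlonglongrightarrow> l" using rl Ll by (simp add: o_def)
  obtain \<sigma> where \<sigma>: "strict_mono \<sigma>" and ae:
    "AE x in lborel. x \<in> Q \<longrightarrow> ennreal (H0 x) \<le> liminf (\<lambda>k. ennreal (H (r (\<sigma> k)) x))"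
    using sub[OF r] by blast
  have Krs: "(\<lambda>k. K (r (\<sigma> k))) \<longlonglongrightarrow> l"
    using LIMSEQ_subseq_LIMSEQ[OF Kr \<sigma>] by (simp add: o_def)
  have "ennreal (LINT x:Q|lborel. H0 x) = (\<integral>\<^sup>+ x. ennreal (indicator Q x * H0 x) \<partial>lborel)"
    unfolding set_lebesgue_integral_def
    using nn_integral_eq_integral[OF intH0] H0b by (auto simp: indicator_def)
  also have "\<dots> \<le> (\<integral>\<^sup>+ x. liminf (\<lambda>k. ennreal (indicator Q x * H (r (\<sigma> k)) x)) \<partial>lborel)"
  proof (rule nn_integral_mono_AE)
    show "AE x in lborel. ennreal (indicator Q x * H0 x) \<le> liminf (\<lambda>k. ennreal (indicator Q x * H (r (\<sigma> k)) x))"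
      using ae by eventually_elim (auto simp: indicator_def)
  qed
  also have "\<dots> \<le> liminf (\<lambda>k. (\<integral>\<^sup>+ x. ennreal (indicator Q x * H (r (\<sigma> k)) x) \<partial>lborel))"
    by (rule nn_integral_liminf) (use Q Hm in measurable)
  also have "(\<lambda>k. (\<integral>\<^sup>+ x. ennreal (indicator Q x * H (r (\<sigma> k)) x) \<partial>lborel)) = (\<lambda>k. ennreal (K (r (\<sigma> k))))"
  proof
    fix k show "(\<integral>\<^sup>+ x. ennreal (indicator Q x * H (r (\<sigma> k)) x) \<partial>lborel) = ennreal (K (r (\<sigma> k)))"
      unfolding Kdef using nn_integral_eq_integral[OF intH] Hb by (auto simp: indicator_def)
  qed
  also have "liminf (\<lambda>k. ennreal (K (r (\<sigma> k)))) = ennreal l"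
    by (rule lim_imp_Liminf) (auto intro!: tendsto_ennrealI Krs)
  finally have "(LINT x:Q|lborel. H0 x) \<le> l" using l0 by (simp add: ennreal_le_iff)
  then show ?thesis using Ll unfolding L_def K_def by simp
qed


lemma mfst: fixes h :: "real \<Rightarrow> real" assumes "h \<in> borel_measurable borel"
  shows "(\<lambda>p::real\<times>real. h (fst p)) \<in> borel_measurable lborel"
proof -
  have "(\<lambda>p::real\<times>real. h (fst p)) \<in> borel_measurable (lborel \<Otimes>\<^sub>M lborel)"
    using assms by measurable
  then show ?thesis by (simp add: lborel_prod)
qed
lemma msnd: fixes h :: "real \<Rightarrow> real" assumes "h \<in> borel_measurable borel"
  shows "(\<lambda>p::real\<times>real. h (snd p)) \<in> borel_measurable lborel"
proof -
  have "(\<lambda>p::real\<times>real. h (snd p)) \<in> borel_measurable (lborel \<Otimes>\<^sub>M lborel)"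
    using assms by measurable
  then show ?thesis by (simp add: lborel_prod)
qed
lemma "(\<lambda>p::real\<times>real. indicator {p. 0 < snd p - fst p \<and> snd p - fst p < e} p) \<in> borel_measurable lborel"
proof -
  have "(\<lambda>p::real\<times>real. indicator {p. 0 < snd p - fst p \<and> snd p - fst p < e} p) \<in> borel_measurable (lborel \<Otimes>\<^sub>M lborel)"
    by measurable
  then show ?thesis by (simp add: lborel_prod)
qed
lemma fixes a c :: "real \<Rightarrow> real" assumes [measurable]: "a \<in> borel_measurable borel" "c \<in> borel_measurable borel"
 shows "(\<lambda>p::real\<times>real. indicator {p. a (fst p) > c (fst p) + e} p) \<in> borel_measurable lborel"
proof -
  have "(\<lambda>p::real\<times>real. indicator {p. a (fst p) > c (fst p) + e} p) \<in> borel_measurable (lborel \<Otimes>\<^sub>M lborel)"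
    by measurable
  then show ?thesis by (simp add: lborel_prod)
qed
lemma AE_both:
  assumes "AE x in (lborel::real measure). P x"
  shows "AE p in (lborel::(real\<times>real) measure). P (fst p) \<and> P (snd p)"
proof -
  obtain N where N: "{x\<in>space lborel. \<not> P x} \<subseteq> N" "emeasure lborel N = 0" "N \<in> sets lborel"
    using assms by (auto elim!: AE_E)
  have N0: "N \<in> null_sets lborel" using N by auto
  have "N \<times> space lborel \<in> null_sets (lborel \<Otimes>\<^sub>M (lborel::real measure))"
    using lborel.times_in_null_sets1[OF N0, of "space lborel"] by simp
  moreover have "space lborel \<times> N \<in> null_sets (lborel \<Otimes>\<^sub>M (lborel::real measure))"
    using lborel.times_in_null_sets2[OF _ N0, of "space lborel" lborel] by simp
  ultimately have "N \<times> space lborel \<union> space lborel \<times> N \<in> null_sets (lborel \<Otimes>\<^sub>M (lborel::real measure))"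
    by auto
  then have nn: "N \<times> UNIV \<union> UNIV \<times> N \<in> null_sets (lborel::(real\<times>real) measure)" by (simp add: lborel_prod)
  show ?thesis
    by (rule AE_I'[OF nn]) (use N(1) in auto)
qed

lemma Ath_bound:
  assumes "in_YB B3 \<theta>" "\<epsilon> > 0" "z \<ge> 0"
  shows "\<bar>Ath B3 \<epsilon> \<theta> z\<bar> \<le> B3"
proof -
  have Z: "{z..z+\<epsilon>} \<subseteq> {0..}" using assms by auto
  have fin: "emeasure lborel {z..z+\<epsilon>} < \<infinity>" using assms by simp
  have i: "set_integrable lborel {z..z+\<epsilon>} (Fx B3 \<theta>)" using Fx_set_integrable[OF assms(1) Z _ fin] by simp
  have "\<bar>LINT w:{z..z+\<epsilon>}|lborel. Fx B3 \<theta> w\<bar> \<le> (LINT w:{z..z+\<epsilon>}|lborel. \<bar>Fx B3 \<theta> w\<bar>)"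
    using set_integral_norm_bound[OF i] by simp
  also have "\<dots> \<le> (LINT w::real:{z..z+\<epsilon>}|lborel. B3)"
  proof (intro set_integral_mono)
    show "set_integrable lborel {z..z+\<epsilon>} (\<lambda>w. \<bar>Fx B3 \<theta> w\<bar>)" using i by (rule set_integrable_abs)
    show "set_integrable lborel {z..z+\<epsilon>} (\<lambda>w::real. B3)" using fin by (intro set_integrable_const_real) auto
    fix w assume "w \<in> {z..z+\<epsilon>}" then show "\<bar>Fx B3 \<theta> w\<bar> \<le> B3" using Fx_bound[OF assms(1)] assms by auto
  qed
  also have "\<dots> = \<epsilon> * B3" using assms fin by (simp add: set_integral_const)
  finally have "\<bar>LINT w:{z..z+\<epsilon>}|lborel. Fx B3 \<theta> w\<bar> \<le> \<epsilon> * B3" .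
  then show ?thesis unfolding Ath_def using assms by (simp add: abs_mult field_simps)
qed

lemma pw:
  fixes u a c :: "nat \<Rightarrow> real"
  assumes u: "u \<longlonglongrightarrow> u0" and a: "a \<longlonglongrightarrow> a0" and c: "c \<longlonglongrightarrow> c0" and u0: "\<And>k. 0 \<le> u k" and dd: "0 \<le> dd"
  shows "ennreal (dd * u0 * of_bool (a0 > c0 + e)) \<le> liminf (\<lambda>k. ennreal (dd * u k * of_bool (a k > c k + e)))"
proof (cases "a0 > c0 + e")
  case True
  have "(\<lambda>k. a k - c k) \<longlonglongrightarrow> a0 - c0" using a c by (rule tendsto_diff)
  moreover have "e < a0 - c0" using True by simp
  ultimately have ev: "eventually (\<lambda>k. e < a k - c k) sequentially" by (rule order_tendstoD)
  have tl: "(\<lambda>k. ennreal (dd * u k)) \<longlonglongrightarrow> ennreal (dd * u0)"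
    by (intro tendsto_ennrealI tendsto_mult tendsto_const u)
  show ?thesis
    unfolding le_Liminf_iff
  proof (intro allI impI)
    fix y assume y: "y < ennreal (dd * u0 * of_bool (a0 > c0 + e))"
    then have "y < ennreal (dd * u0)" using True by simp
    then have "eventually (\<lambda>k. y < ennreal (dd * u k)) sequentially" using order_tendstoD(1)[OF tl] by blast
    with ev show "eventually (\<lambda>k. y < ennreal (dd * u k * of_bool (a k > c k + e))) sequentially"
      by eventually_elim auto
  qed
next
  case False
  then show ?thesis by simp
qed

lemma X_props: assumes "in_X T B1 \<gamma>" "t \<in> {0<..<T}" shows "\<gamma> t \<in> {0..1}" "continuous (at_left t) \<gamma>"
  using assms unfolding in_X_def by auto

lemma X_meas: assumes "in_X T B1 \<gamma>" shows "(\<lambda>t. indicator {0<..<T} t * \<gamma> t) \<in> borel_measurable borel"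
proof -
  have "continuous_on ({0<..<T} \<times> {0..1}) (snd :: real \<times> real \<Rightarrow> real)"
    using continuous_on_snd[OF continuous_on_id] by simp
  then show ?thesis using meas_comp[of T snd \<gamma>] X_props[OF assms] by auto
qed

lemma X_diff_int:
  assumes X1: "in_X T B1 \<gamma>" and X2: "in_X T B1 \<gamma>'" and T: "T > 0"
  shows "set_integrable lborel {0<..<T} (\<lambda>x. \<gamma> x - \<gamma>' x)" "set_integrable lborel {0<..<T} (\<lambda>x. (\<gamma> x - \<gamma>' x)^2)"
proof -
  let ?S = "{0<..<T}"
  have m1: "(\<lambda>t. indicator ?S t * \<gamma> t) \<in> borel_measurable borel" by (rule X_meas[OF X1])
  have m2: "(\<lambda>t. indicator ?S t * \<gamma>' t) \<in> borel_measurable borel" by (rule X_meas[OF X2])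
  have e1: "(\<lambda>x. indicator ?S x *\<^sub>R (\<gamma> x - \<gamma>' x)) = (\<lambda>x. indicator ?S x * \<gamma> x - indicator ?S x * \<gamma>' x)"
    by (auto simp: indicator_def)
  have e2: "(\<lambda>x. indicator ?S x *\<^sub>R (\<gamma> x - \<gamma>' x)^2) = (\<lambda>x. (indicator ?S x * \<gamma> x - indicator ?S x * \<gamma>' x)^2)"
    by (auto simp: indicator_def)
  have b: "\<bar>\<gamma> x - \<gamma>' x\<bar> \<le> 1" if "x \<in> ?S" for x
    using X_props(1)[OF X1 that] X_props(1)[OF X2 that] by auto
  show "set_integrable lborel ?S (\<lambda>x. \<gamma> x - \<gamma>' x)"
    unfolding set_integrable_def
  proof (rule integrableI_bounded_set[where A="?S" and B=1])
    show "(\<lambda>x. indicator ?S x *\<^sub>R (\<gamma> x - \<gamma>' x)) \<in> borel_measurable lborel"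
      unfolding e1 using m1 m2 by simp
  qed (use b T in auto)
  show "set_integrable lborel ?S (\<lambda>x. (\<gamma> x - \<gamma>' x)^2)"
    unfolding set_integrable_def
  proof (rule integrableI_bounded_set[where A="?S" and B=1])
    show "(\<lambda>x. indicator ?S x *\<^sub>R (\<gamma> x - \<gamma>' x)^2) \<in> borel_measurable lborel"
      unfolding e2 using m1 m2 by simp
    show "AE x in lborel. x \<in> ?S \<longrightarrow> norm (indicator ?S x *\<^sub>R (\<gamma> x - \<gamma>' x)^2) \<le> 1"
    proof (intro AE_I2 impI)
      fix x assume x: "x \<in> ?S"
      have "\<bar>\<gamma> x - \<gamma>' x\<bar>^2 \<le> 1^2" using b[OF x] by (intro power_mono) auto
      then show "norm (indicator ?S x *\<^sub>R (\<gamma> x - \<gamma>' x)^2) \<le> 1" using x by simp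
    qed
  qed (use T in auto)
qed


lemma Q_props:
  assumes "T > 0"
  shows "({0<..<T} \<times> {0<..<T} :: (real \<times> real) set) \<in> sets lborel"
    "emeasure lborel ({0<..<T} \<times> {0<..<T} :: (real \<times> real) set) < \<infinity>"
proof -
  show "({0<..<T} \<times> {0<..<T} :: (real \<times> real) set) \<in> sets lborel"
    by (simp add: open_Times borel_open)
  show "emeasure lborel ({0<..<T} \<times> {0<..<T} :: (real \<times> real) set) < \<infinity>"
    by (intro emeasure_bounded_finite bounded_Times) auto
qed

lemma set_integral_cong_gen:
  assumes "\<And>x. x \<in> S \<Longrightarrow> f x = g x"
  shows "(LINT x:S|M. f x) = (LINT x:S|M. (g x::real))"
  unfolding set_lebesgue_integral_def
  by (intro Bochner_Integration.integral_cong) (auto simp: indicator_def assms)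

lemma lsc_generic:
  fixes T B1 B3 \<epsilon> \<epsilon>1 \<epsilon>2 C :: real and Th :: "real \<times> real \<times> real \<Rightarrow> real"
    and U :: "(real \<Rightarrow> real \<Rightarrow> real) \<Rightarrow> (real \<Rightarrow> real) \<Rightarrow> real \<times> real \<Rightarrow> real"
  assumes T: "T > 0" and e: "\<epsilon> > 0" and cTh: "continuous_on UNIV Th"
    and Ub: "\<And>\<Theta>t \<gamma> p. in_Y T B3 \<Theta>t \<Longrightarrow> in_X T B1 \<gamma> \<Longrightarrow> p \<in> {0<..<T} \<times> {0<..<T} \<Longrightarrow>
        0 \<le> U \<Theta>t \<gamma> p \<and> U \<Theta>t \<gamma> p \<le> C"
    and Um: "\<And>\<Theta>t \<gamma>. in_Y T B3 \<Theta>t \<Longrightarrow> in_X T B1 \<gamma> \<Longrightarrow>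
        \<exists>V. V \<in> borel_measurable lborel \<and> (\<forall>p\<in>{0<..<T} \<times> {0<..<T}. V p = U \<Theta>t \<gamma> p)"
    and Uc: "\<And>\<Theta>t \<gamma> \<Theta>n \<gamma>n t1 t2. in_Y T B3 \<Theta>t \<Longrightarrow> in_X T B1 \<gamma> \<Longrightarrow> (\<And>n::nat. in_Y T B3 (\<Theta>n n)) \<Longrightarrow>
        (\<And>n. in_X T B1 (\<gamma>n n)) \<Longrightarrow> (\<lambda>n. Ydist T (\<Theta>n n) \<Theta>t) \<longlonglongrightarrow> 0 \<Longrightarrow>
        t1 \<in> {0<..<T} \<Longrightarrow> t2 \<in> {0<..<T} \<Longrightarrow> (\<lambda>n. \<gamma>n n t1) \<longlonglongrightarrow> \<gamma> t1 \<Longrightarrow> (\<lambda>n. \<gamma>n n t2) \<longlonglongrightarrow> \<gamma> t2 \<Longrightarrow>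
        (\<lambda>n. U (\<Theta>n n) (\<gamma>n n) (t1, t2)) \<longlonglongrightarrow> U \<Theta>t \<gamma> (t1, t2)"
  shows "lsc_YRX T B1 B3 (\<lambda>\<Theta>t s \<gamma>. LINT p:({0<..<T} \<times> {0<..<T})|lborel.
        indicator {p. 0 < snd p - fst p \<and> snd p - fst p < \<epsilon>1} p * U \<Theta>t \<gamma> p *
        indicator {p. A_eps B3 \<epsilon> \<Theta>t (fst p) (\<gamma> (fst p)) > Th (s, \<gamma> (fst p), fst p) + \<epsilon>2} p)"
  unfolding lsc_YRX_def
proof (intro allI impI, elim conjE)
  fix \<Theta>t :: "real \<Rightarrow> real \<Rightarrow> real" and s :: real and \<gamma> :: "real \<Rightarrow> real"
    and \<Theta>n :: "nat \<Rightarrow> real \<Rightarrow> real \<Rightarrow> real" and sn :: "nat \<Rightarrow> real" and \<gamma>n :: "nat \<Rightarrow> real \<Rightarrow> real"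
  assume Y: "in_Y T B3 \<Theta>t" and X: "in_X T B1 \<gamma>" and YXn: "\<forall>n. in_Y T B3 (\<Theta>n n) \<and> in_X T B1 (\<gamma>n n)"
    and cY: "(\<lambda>n. Ydist T (\<Theta>n n) \<Theta>t) \<longlonglongrightarrow> 0" and cs: "sn \<longlonglongrightarrow> s"
    and cg: "(\<lambda>n. L2dist 0 T (\<gamma>n n) \<gamma>) \<longlonglongrightarrow> 0"
  have Yn: "\<And>n. in_Y T B3 (\<Theta>n n)" and Xn: "\<And>n. in_X T B1 (\<gamma>n n)" using YXn by auto
  define S where "S = {0<..<T::real}"
  define Q where "Q = S \<times> S"
  define D where "D = {p::real\<times>real. 0 < snd p - fst p \<and> snd p - fst p < \<epsilon>1}"
  define mA where "mA \<Theta>' \<gamma>' t = indicator S t * A_eps B3 \<epsilon> \<Theta>' t (\<gamma>' t)" for \<Theta>' \<gamma>' t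
  define mC where "mC s' \<gamma>' t = indicator S t * Th (s', \<gamma>' t, t)" for s' \<gamma>' t
  define Hf where "Hf \<Theta>' s' \<gamma>' V p = indicator D p * V p *
       indicator {p. mA \<Theta>' \<gamma>' (fst p) > mC s' \<gamma>' (fst p) + \<epsilon>2} p" for \<Theta>' s' \<gamma>' and V :: "real \<times> real \<Rightarrow> real" and p :: "real \<times> real"
  define Kf where "Kf \<Theta>' s' \<gamma>' = (LINT p:Q|lborel. indicator D p * U \<Theta>' \<gamma>' p *
        indicator {p. A_eps B3 \<epsilon> \<Theta>' (fst p) (\<gamma>' (fst p)) > Th (s', \<gamma>' (fst p), fst p) + \<epsilon>2} p)" for \<Theta>' s' \<gamma>'
  have mA_meas: "mA \<Theta>' \<gamma>' \<in> borel_measurable borel" if "in_Y T B3 \<Theta>'" "in_X T B1 \<gamma>'" for \<Theta>' \<gamma>'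
    unfolding mA_def S_def
    using meas_comp[OF A_joint_cont[OF that(1) e], of \<gamma>'] X_props[OF that(2)] by auto
  have mC_meas: "mC s' \<gamma>' \<in> borel_measurable borel" if "in_X T B1 \<gamma>'" for s' \<gamma>'
  proof -
    have "continuous_on ({0<..<T} \<times> {0..1}) (\<lambda>p::real\<times>real. Th (s', snd p, fst p))"
      by (rule continuous_on_compose2[OF cTh]) (auto intro!: continuous_intros)
    then show ?thesis unfolding mC_def S_def
      using meas_comp[of T "\<lambda>p. Th (s', snd p, fst p)" \<gamma>'] X_props[OF that] by auto
  qed
  have Hf_meas: "Hf \<Theta>' s' \<gamma>' V \<in> borel_measurable lborel"
    if "in_Y T B3 \<Theta>'" "in_X T B1 \<gamma>'" "V \<in> borel_measurable lborel" for \<Theta>' s' \<gamma>' V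
  proof -
    have [measurable]: "mA \<Theta>' \<gamma>' \<in> borel_measurable borel" "mC s' \<gamma>' \<in> borel_measurable borel"
      using mA_meas[OF that(1,2)] mC_meas[OF that(2)] by auto
    have V: "V \<in> borel_measurable (lborel \<Otimes>\<^sub>M lborel)" using that(3) by (simp add: lborel_prod)
    have "(\<lambda>p::real\<times>real. indicator D p * V p *
       indicator {p. mA \<Theta>' \<gamma>' (fst p) > mC s' \<gamma>' (fst p) + \<epsilon>2} p) \<in> borel_measurable (lborel \<Otimes>\<^sub>M lborel)"
      unfolding D_def using V by measurable
    then show ?thesis unfolding Hf_def by (simp add: lborel_prod)
  qed
  have Hf_eq: "Hf \<Theta>' s' \<gamma>' V p = indicator D p * U \<Theta>' \<gamma>' p *
        indicator {p. A_eps B3 \<epsilon> \<Theta>' (fst p) (\<gamma>' (fst p)) > Th (s', \<gamma>' (fst p), fst p) + \<epsilon>2} p"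
    if "p \<in> Q" "\<forall>p\<in>Q. V p = U \<Theta>' \<gamma>' p" for \<Theta>' s' \<gamma>' V p
    using that unfolding Hf_def mA_def mC_def Q_def by (auto simp: indicator_def)
  have Hf_b: "0 \<le> Hf \<Theta>' s' \<gamma>' V p \<and> Hf \<Theta>' s' \<gamma>' V p \<le> C"
    if "in_Y T B3 \<Theta>'" "in_X T B1 \<gamma>'" "p \<in> Q" "\<forall>p\<in>Q. V p = U \<Theta>' \<gamma>' p" for \<Theta>' s' \<gamma>' V p
    using Ub[OF that(1,2), of p] that(3,4) unfolding Hf_def Q_def S_def by (auto simp: indicator_def)
  obtain Vn where Vn: "\<And>n. Vn n \<in> borel_measurable lborel" "\<And>n. \<forall>p\<in>Q. Vn n p = U (\<Theta>n n) (\<gamma>n n) p"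
  proof -
    have "\<forall>n. \<exists>V. V \<in> borel_measurable lborel \<and> (\<forall>p\<in>Q. V p = U (\<Theta>n n) (\<gamma>n n) p)"
      using Um[OF Yn Xn] unfolding Q_def S_def by blast
    then obtain Vn where "\<forall>n. Vn n \<in> borel_measurable lborel \<and> (\<forall>p\<in>Q. Vn n p = U (\<Theta>n n) (\<gamma>n n) p)"
      by metis
    then show ?thesis using that by blast
  qed
  obtain V0 where V0: "V0 \<in> borel_measurable lborel" "\<forall>p\<in>Q. V0 p = U \<Theta>t \<gamma> p"
    using Um[OF Y X] unfolding Q_def S_def by metis
  define H where "H n = Hf (\<Theta>n n) (sn n) (\<gamma>n n) (Vn n)" for n
  define H0 where "H0 = Hf \<Theta>t s \<gamma> V0"
  have QQ: "Q \<in> sets lborel" "emeasure lborel Q < \<infinity>" unfolding Q_def S_def using Q_props[OF T] by auto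
  have fat: "ereal (LINT x:Q|lborel. H0 x) \<le> liminf (\<lambda>n. ereal (LINT x:Q|lborel. H n x))"
  proof (rule fatou_sub[OF QQ])
    show "H n \<in> borel_measurable lborel" for n unfolding H_def by (rule Hf_meas[OF Yn Xn Vn(1)])
    show "H0 \<in> borel_measurable lborel" unfolding H0_def by (rule Hf_meas[OF Y X V0(1)])
    show "x \<in> Q \<Longrightarrow> 0 \<le> H n x \<and> H n x \<le> C" for n x unfolding H_def by (rule Hf_b[OF Yn Xn _ Vn(2)])
    show "x \<in> Q \<Longrightarrow> 0 \<le> H0 x \<and> H0 x \<le> C" for x unfolding H0_def by (rule Hf_b[OF Y X _ V0(2)])
    fix r :: "nat \<Rightarrow> nat" assume r: "strict_mono r"
    define u where "u n x = indicator S x * (\<gamma>n (r n) x - \<gamma> x)" for n x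
    have int_u: "integrable lborel (u n)" for n
      using X_diff_int(1)[OF Xn X T] unfolding u_def set_integrable_def S_def by simp
    have L1: "(\<lambda>n. (\<integral>x. norm (u n x) \<partial>lborel)) \<longlonglongrightarrow> 0"
    proof (rule Lim_null_comparison)
      have "(\<lambda>n. L2dist 0 T (\<gamma>n (r n)) \<gamma>) \<longlonglongrightarrow> 0"
        using LIMSEQ_subseq_LIMSEQ[OF cg r] by (simp add: o_def)
      then show "(\<lambda>n. sqrt T * L2dist 0 T (\<gamma>n (r n)) \<gamma>) \<longlonglongrightarrow> 0"
        using tendsto_mult_right_zero by blast
      show "\<forall>\<^sub>F n in sequentially. norm (\<integral>x. norm (u n x) \<partial>lborel) \<le> sqrt T * L2dist 0 T (\<gamma>n (r n)) \<gamma>"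
      proof (intro always_eventually allI)
        fix n
        have "(\<integral>x. norm (u n x) \<partial>lborel) = (LINT x:S|lborel. \<bar>\<gamma>n (r n) x - \<gamma> x\<bar>)"
          unfolding u_def set_lebesgue_integral_def by (intro Bochner_Integration.integral_cong) (auto simp: indicator_def)
        also have "\<dots> \<le> sqrt (measure lborel S * (LINT x:S|lborel. (\<gamma>n (r n) x - \<gamma> x)^2))"
          unfolding S_def using X_diff_int[OF Xn X T] T
          by (intro L1_le_L2) auto
        also have "\<dots> = sqrt T * L2dist 0 T (\<gamma>n (r n)) \<gamma>"
          unfolding S_def L2dist_def using T by (simp add: real_sqrt_mult)
        finally show "norm (\<integral>x. norm (u n x) \<partial>lborel) \<le> sqrt T * L2dist 0 T (\<gamma>n (r n)) \<gamma>"
          by (simp add: integral_nonneg_AE)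
      qed
    qed
    obtain \<sigma> where \<sigma>: "strict_mono \<sigma>" and aeu: "AE x in lborel. (\<lambda>k. u (\<sigma> k) x) \<longlonglongrightarrow> 0"
      using tendsto_L1_AE_subseq[OF int_u L1] by blast
    define \<rho> where "\<rho> = r \<circ> \<sigma>"
    have \<rho>: "strict_mono \<rho>" unfolding \<rho>_def using r \<sigma> by (rule strict_mono_o)
    have aeg: "AE x in lborel. x \<in> S \<longrightarrow> (\<lambda>k. \<gamma>n (\<rho> k) x) \<longlonglongrightarrow> \<gamma> x"
      using aeu
    proof eventually_elim
      case (elim x)
      show ?case
      proof
        assume x: "x \<in> S"
        have "(\<lambda>k. (\<gamma>n (\<rho> k) x - \<gamma> x) + \<gamma> x) \<longlonglongrightarrow> 0 + \<gamma> x"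
          using elim x by (intro tendsto_add tendsto_const) (simp add: u_def \<rho>_def)
        then show "(\<lambda>k. \<gamma>n (\<rho> k) x) \<longlonglongrightarrow> \<gamma> x" by simp
      qed
    qed
    have aep: "AE p in (lborel :: (real\<times>real) measure).
        (fst p \<in> S \<longrightarrow> (\<lambda>k. \<gamma>n (\<rho> k) (fst p)) \<longlonglongrightarrow> \<gamma> (fst p)) \<and>
        (snd p \<in> S \<longrightarrow> (\<lambda>k. \<gamma>n (\<rho> k) (snd p)) \<longlonglongrightarrow> \<gamma> (snd p))"
      by (rule AE_both[OF aeg])
    show "\<exists>\<sigma>. strict_mono \<sigma> \<and> (AE x in lborel. x \<in> Q \<longrightarrow> ennreal (H0 x) \<le> liminf (\<lambda>k. ennreal (H (r (\<sigma> k)) x)))"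
    proof (intro exI conjI)
      show "strict_mono \<sigma>" by fact
      show "AE x in lborel. x \<in> Q \<longrightarrow> ennreal (H0 x) \<le> liminf (\<lambda>k. ennreal (H (r (\<sigma> k)) x))"
        using aep
      proof eventually_elim
        case (elim p)
        show ?case
        proof
          assume pQ: "p \<in> Q"
          obtain t1 t2 where p: "p = (t1, t2)" by (cases p)
          have t1: "t1 \<in> S" and t2: "t2 \<in> S" using pQ p unfolding Q_def by auto
          have g1: "(\<lambda>k. \<gamma>n (\<rho> k) t1) \<longlonglongrightarrow> \<gamma> t1" and g2: "(\<lambda>k. \<gamma>n (\<rho> k) t2) \<longlonglongrightarrow> \<gamma> t2"
            using elim t1 t2 p by auto
          have cY\<rho>: "(\<lambda>k. Ydist T (\<Theta>n (\<rho> k)) \<Theta>t) \<longlonglongrightarrow> 0"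
            using LIMSEQ_subseq_LIMSEQ[OF cY \<rho>] by (simp add: o_def)
          have cs\<rho>: "(\<lambda>k. sn (\<rho> k)) \<longlonglongrightarrow> s"
            using LIMSEQ_subseq_LIMSEQ[OF cs \<rho>] by (simp add: o_def)
          have uc: "(\<lambda>k. U (\<Theta>n (\<rho> k)) (\<gamma>n (\<rho> k)) (t1, t2)) \<longlonglongrightarrow> U \<Theta>t \<gamma> (t1, t2)"
            by (rule Uc[OF Y X Yn Xn cY\<rho>]) (use t1 t2 g1 g2 S_def in auto)
          have ac: "(\<lambda>k. A_eps B3 \<epsilon> (\<Theta>n (\<rho> k)) t1 (\<gamma>n (\<rho> k) t1)) \<longlonglongrightarrow> A_eps B3 \<epsilon> \<Theta>t t1 (\<gamma> t1)"
            by (rule A_conv[OF Y Yn cY\<rho> _ g1 _ _ e]) (use t1 S_def X_props(1)[OF Xn] X_props(1)[OF X] in auto)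
          have isc: "isCont Th (s, \<gamma> t1, t1)" using cTh by (simp add: continuous_on_eq_continuous_at)
          have cc: "(\<lambda>k. Th (sn (\<rho> k), \<gamma>n (\<rho> k) t1, t1)) \<longlonglongrightarrow> Th (s, \<gamma> t1, t1)"
            by (rule isCont_tendsto_compose[OF isc]) (intro tendsto_Pair cs\<rho> g1 tendsto_const)
          have "ennreal (indicator D p * U \<Theta>t \<gamma> p * of_bool (A_eps B3 \<epsilon> \<Theta>t t1 (\<gamma> t1) > Th (s, \<gamma> t1, t1) + \<epsilon>2))
              \<le> liminf (\<lambda>k. ennreal (indicator D p * U (\<Theta>n (\<rho> k)) (\<gamma>n (\<rho> k)) p *
                   of_bool (A_eps B3 \<epsilon> (\<Theta>n (\<rho> k)) t1 (\<gamma>n (\<rho> k) t1) > Th (sn (\<rho> k), \<gamma>n (\<rho> k) t1, t1) + \<epsilon>2)))"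
            by (rule pw) (use uc ac cc p Ub[OF Yn Xn] pQ Q_def S_def in auto)
          moreover have "H0 p = indicator D p * U \<Theta>t \<gamma> p * of_bool (A_eps B3 \<epsilon> \<Theta>t t1 (\<gamma> t1) > Th (s, \<gamma> t1, t1) + \<epsilon>2)"
            unfolding H0_def using Hf_eq[OF pQ V0(2)] p by (simp add: indicator_def)
          moreover have "H (r (\<sigma> k)) p = indicator D p * U (\<Theta>n (\<rho> k)) (\<gamma>n (\<rho> k)) p *
                   of_bool (A_eps B3 \<epsilon> (\<Theta>n (\<rho> k)) t1 (\<gamma>n (\<rho> k) t1) > Th (sn (\<rho> k), \<gamma>n (\<rho> k) t1, t1) + \<epsilon>2)" for k
            unfolding H_def using Hf_eq[OF pQ Vn(2)] p by (simp add: indicator_def \<rho>_def)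
          ultimately show "ennreal (H0 p) \<le> liminf (\<lambda>k. ennreal (H (r (\<sigma> k)) p))" by simp
        qed
      qed
    qed
  qed
  have e0: "(LINT x:Q|lborel. H0 x) = Kf \<Theta>t s \<gamma>"
    unfolding Kf_def H0_def by (rule set_integral_cong_gen) (rule Hf_eq[OF _ V0(2)])
  have en: "(LINT x:Q|lborel. H n x) = Kf (\<Theta>n n) (sn n) (\<gamma>n n)" for n
    unfolding Kf_def H_def by (rule set_integral_cong_gen) (rule Hf_eq[OF _ Vn(2)])
  show "ereal (LINT p:({0<..<T} \<times> {0<..<T})|lborel. indicator {p. 0 < snd p - fst p \<and> snd p - fst p < \<epsilon>1} p * U \<Theta>t \<gamma> p *
        indicator {p. A_eps B3 \<epsilon> \<Theta>t (fst p) (\<gamma> (fst p)) > Th (s, \<gamma> (fst p), fst p) + \<epsilon>2} p)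
    \<le> liminf (\<lambda>n. ereal (LINT p:({0<..<T} \<times> {0<..<T})|lborel. indicator {p. 0 < snd p - fst p \<and> snd p - fst p < \<epsilon>1} p * U (\<Theta>n n) (\<gamma>n n) p *
        indicator {p. A_eps B3 \<epsilon> (\<Theta>n n) (fst p) (\<gamma>n n (fst p)) > Th (sn n, \<gamma>n n (fst p), fst p) + \<epsilon>2} p))"
  proof -
    have "ereal (Kf \<Theta>t s \<gamma>) \<le> liminf (\<lambda>n. ereal (Kf (\<Theta>n n) (sn n) (\<gamma>n n)))"
      using fat by (simp only: e0 en)
    then show ?thesis unfolding Kf_def Q_def S_def D_def .
  qed
qed


lemma meas_fst_snd_lborel:
  fixes h1 h2 :: "real \<Rightarrow> real" and F :: "real \<Rightarrow> real \<Rightarrow> real"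
  assumes [measurable]: "h1 \<in> borel_measurable borel" "h2 \<in> borel_measurable borel"
    and [measurable]: "(\<lambda>x. F (fst x) (snd x)) \<in> borel_measurable (borel \<Otimes>\<^sub>M borel)"
  shows "(\<lambda>p::real\<times>real. F (h1 (fst p)) (h2 (snd p))) \<in> borel_measurable lborel"
proof -
  have "(\<lambda>p::real\<times>real. F (h1 (fst p)) (h2 (snd p))) \<in> borel_measurable (lborel \<Otimes>\<^sub>M lborel)"
  proof -
    have "(\<lambda>p::real\<times>real. (h1 (fst p), h2 (snd p))) \<in> measurable (lborel \<Otimes>\<^sub>M lborel) (borel \<Otimes>\<^sub>M borel)"
      by measurable
    from measurable_compose[OF this assms(3)] show ?thesis by simp
  qed
  then show ?thesis by (simp add: lborel_prod)
qed

lemma lsc_K1: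
  assumes T: "T > 0" and e: "\<epsilon> > 0" and cTh: "continuous_on UNIV Th"
  shows "lsc_YRX T B1 B3 (K1 T B3 \<epsilon> \<epsilon>1 \<epsilon>2 Th)"
proof -
  define U where "U \<Theta>t \<gamma> p = \<bar>A_eps B3 \<epsilon> \<Theta>t (fst p) (\<gamma> (fst p)) - A_eps B3 \<epsilon> \<Theta>t (snd p) (\<gamma> (snd p))\<bar>"
    for \<Theta>t :: "real \<Rightarrow> real \<Rightarrow> real" and \<gamma> :: "real \<Rightarrow> real" and p :: "real \<times> real"
  have eq: "K1 T B3 \<epsilon> \<epsilon>1 \<epsilon>2 Th = (\<lambda>\<Theta>t s \<gamma>. LINT p:({0<..<T} \<times> {0<..<T})|lborel.
        indicator {p. 0 < snd p - fst p \<and> snd p - fst p < \<epsilon>1} p * U \<Theta>t \<gamma> p *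
        indicator {p. A_eps B3 \<epsilon> \<Theta>t (fst p) (\<gamma> (fst p)) > Th (s, \<gamma> (fst p), fst p) + \<epsilon>2} p)"
    by (intro ext) (simp only: K1_def U_def)
  have Ab: "\<bar>A_eps B3 \<epsilon> \<Theta>t t (\<gamma> t)\<bar> \<le> B3" if "in_Y T B3 \<Theta>t" "in_X T B1 \<gamma>" "t \<in> {0<..<T}" for \<Theta>t \<gamma> t
  proof -
    have "in_YB B3 (\<Theta>t t)" using that unfolding in_Y_def by auto
    then show ?thesis unfolding A_eps_eq using Ath_bound[OF _ e] X_props(1)[OF that(2,3)] by auto
  qed
  show ?thesis unfolding eq
  proof (rule lsc_generic[OF T e cTh, where C="2*B3"])
    fix \<Theta>t \<gamma> p assume Y: "in_Y T B3 \<Theta>t" and X: "in_X T B1 \<gamma>" and p: "p \<in> {0<..<T} \<times> {0<..<T}"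
    show "0 \<le> U \<Theta>t \<gamma> p \<and> U \<Theta>t \<gamma> p \<le> 2 * B3"
      using Ab[OF Y X, of "fst p"] Ab[OF Y X, of "snd p"] p unfolding U_def by auto
  next
    fix \<Theta>t \<gamma> assume Y: "in_Y T B3 \<Theta>t" and X: "in_X T B1 \<gamma>"
    define mA where "mA t = indicator {0<..<T} t * A_eps B3 \<epsilon> \<Theta>t t (\<gamma> t)" for t
    have mA: "mA \<in> borel_measurable borel"
      unfolding mA_def using meas_comp[OF A_joint_cont[OF Y e], of \<gamma>] X_props[OF X] by auto
    have "(\<lambda>p::real\<times>real. (\<lambda>a b. \<bar>a - b\<bar>) (mA (fst p)) (mA (snd p))) \<in> borel_measurable lborel"
      by (rule meas_fst_snd_lborel[OF mA mA]) measurable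
    then show "\<exists>V. V \<in> borel_measurable lborel \<and> (\<forall>p\<in>{0<..<T} \<times> {0<..<T}. V p = U \<Theta>t \<gamma> p)"
      by (intro exI[of _ "\<lambda>p. \<bar>mA (fst p) - mA (snd p)\<bar>"]) (auto simp: U_def mA_def)
  next
    fix \<Theta>t \<gamma> and \<Theta>n :: "nat \<Rightarrow> real \<Rightarrow> real \<Rightarrow> real" and \<gamma>n t1 t2
    assume Y: "in_Y T B3 \<Theta>t" and X: "in_X T B1 \<gamma>" and Yn: "\<And>n. in_Y T B3 (\<Theta>n n)" and Xn: "\<And>n. in_X T B1 (\<gamma>n n)"
      and cY: "(\<lambda>n. Ydist T (\<Theta>n n) \<Theta>t) \<longlonglongrightarrow> 0" and t1: "t1 \<in> {0<..<T}" and t2: "t2 \<in> {0<..<T}"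
      and g1: "(\<lambda>n. \<gamma>n n t1) \<longlonglongrightarrow> \<gamma> t1" and g2: "(\<lambda>n. \<gamma>n n t2) \<longlonglongrightarrow> \<gamma> t2"
    have a1: "(\<lambda>n. A_eps B3 \<epsilon> (\<Theta>n n) t1 (\<gamma>n n t1)) \<longlonglongrightarrow> A_eps B3 \<epsilon> \<Theta>t t1 (\<gamma> t1)"
      by (rule A_conv[OF Y Yn cY _ g1 _ _ e]) (use t1 X_props(1)[OF Xn] X_props(1)[OF X] in auto)
    have a2: "(\<lambda>n. A_eps B3 \<epsilon> (\<Theta>n n) t2 (\<gamma>n n t2)) \<longlonglongrightarrow> A_eps B3 \<epsilon> \<Theta>t t2 (\<gamma> t2)"
      by (rule A_conv[OF Y Yn cY _ g2 _ _ e]) (use t2 X_props(1)[OF Xn] X_props(1)[OF X] in auto)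
    show "(\<lambda>n. U (\<Theta>n n) (\<gamma>n n) (t1, t2)) \<longlonglongrightarrow> U \<Theta>t \<gamma> (t1, t2)"
      unfolding U_def using a1 a2 by (auto intro!: tendsto_intros)
  qed
qed

lemma lsc_K2:
  assumes T: "T > 0" and e: "\<epsilon> > 0" and cTh: "continuous_on UNIV Th"
  shows "lsc_YRX T B1 B3 (K2 T B3 \<epsilon> \<epsilon>1 \<epsilon>2 Th)"
proof -
  define U where "U \<Theta>t \<gamma> p = max (\<gamma> (snd p) - \<gamma> (fst p)) 0"
    for \<Theta>t :: "real \<Rightarrow> real \<Rightarrow> real" and \<gamma> :: "real \<Rightarrow> real" and p :: "real \<times> real"
  have eq: "K2 T B3 \<epsilon> \<epsilon>1 \<epsilon>2 Th = (\<lambda>\<Theta>t s \<gamma>. LINT p:({0<..<T} \<times> {0<..<T})|lborel.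
        indicator {p. 0 < snd p - fst p \<and> snd p - fst p < \<epsilon>1} p * U \<Theta>t \<gamma> p *
        indicator {p. A_eps B3 \<epsilon> \<Theta>t (fst p) (\<gamma> (fst p)) > Th (s, \<gamma> (fst p), fst p) + \<epsilon>2} p)"
    by (intro ext) (simp only: K2_def U_def)
  show ?thesis unfolding eq
  proof (rule lsc_generic[OF T e cTh, where C="1"])
    fix \<Theta>t \<gamma> p assume Y: "in_Y T B3 \<Theta>t" and X: "in_X T B1 \<gamma>" and p: "p \<in> {0<..<T} \<times> {0<..<T}"
    show "0 \<le> U \<Theta>t \<gamma> p \<and> U \<Theta>t \<gamma> p \<le> 1"
      using X_props(1)[OF X, of "fst p"] X_props(1)[OF X, of "snd p"] p unfolding U_def by auto
  next
    fix \<Theta>t \<gamma> assume Y: "in_Y T B3 \<Theta>t" and X: "in_X T B1 \<gamma>"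
    define mg where "mg t = indicator {0<..<T} t * \<gamma> t" for t
    have mg: "mg \<in> borel_measurable borel" unfolding mg_def by (rule X_meas[OF X])
    have "(\<lambda>p::real\<times>real. (\<lambda>a b. max (b - a) 0) (mg (fst p)) (mg (snd p))) \<in> borel_measurable lborel"
      by (rule meas_fst_snd_lborel[OF mg mg]) measurable
    then show "\<exists>V. V \<in> borel_measurable lborel \<and> (\<forall>p\<in>{0<..<T} \<times> {0<..<T}. V p = U \<Theta>t \<gamma> p)"
      by (intro exI[of _ "\<lambda>p. max (mg (snd p) - mg (fst p)) 0"]) (auto simp: U_def mg_def)
  next
    fix \<Theta>t and \<gamma> :: "real \<Rightarrow> real" and \<Theta>n :: "nat \<Rightarrow> real \<Rightarrow> real \<Rightarrow> real" and \<gamma>n :: "nat \<Rightarrow> real \<Rightarrow> real" and t1 t2 :: real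
    assume g1: "(\<lambda>n. \<gamma>n n t1) \<longlonglongrightarrow> \<gamma> t1" and g2: "(\<lambda>n. \<gamma>n n t2) \<longlonglongrightarrow> \<gamma> t2"
    show "(\<lambda>n. U (\<Theta>n n) (\<gamma>n n) (t1, t2)) \<longlonglongrightarrow> U \<Theta>t \<gamma> (t1, t2)"
      unfolding U_def using g1 g2 by (auto intro!: tendsto_intros)
  qed
qed

theorem lemma6p10:
  fixes T B1 B3 \<epsilon> \<epsilon>1 \<epsilon>2 :: real
    and Qsat Th :: "real \<times> real \<times> real \<Rightarrow> real"
  assumes "T > 0" "B1 > 0" "B3 > 0" "\<epsilon> > 0" "\<epsilon>1 > 0" "\<epsilon>2 > 0"
    and "smooth Qsat"
    and "\<And>\<theta> z t. deriv (\<lambda>x. Qsat (x, z, t)) \<theta> > 0"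
    and "\<And>\<theta> z t. deriv (\<lambda>x. Qsat (\<theta>, x, t)) z < 0"
    and "\<And>w z t. Th (w, z, t) + Qsat (Th (w, z, t), z, t) = w"
    and "smooth Th"
  shows "lsc_YRX T B1 B3 (K1 T B3 \<epsilon> \<epsilon>1 \<epsilon>2 Th) \<and>
         lsc_YRX T B1 B3 (K2 T B3 \<epsilon> \<epsilon>1 \<epsilon>2 Th)"
proof -
  have "Ck 0 Th" using assms(11) unfolding smooth_def by blast
  then have c: "continuous_on UNIV Th" by simp
  show ?thesis using lsc_K1[OF assms(1,4) c] lsc_K2[OF assms(1,4) c] by blast
qed

end
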